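(* Let $\varepsilon>0$ and $m(x)=\tanh x$. For $\mathcal{E}\in(0,1)$ let $x_\pm=\pm\operatorname{arctanh}(\sqrt{\mathcal{E}})$ be the two solutions of $\tanh^2 x=\mathcal{E}$, and define $$\Phi(\mathcal{E}):=\frac{1}{\varepsilon}\int_{x_-}^{x_+}\sqrt{\mathcal{E}-\tanh^2 x}\,dx,$$ with $\Phi(0):=0$. Then $\Phi(\mathcal{E})=\frac{\pi}{\varepsilon}\bigl(1-\sqrt{1-\mathcal{E}}\bigr)$ for $\mathcal{E}\in[0,1)$. Consequently, for $\sigma_{\mathcal{D}}\in\{-1,+1\}$ and integers $n\ge0$ with $0\le\varepsilon\bigl(n+\frac{\sigma_{\mathcal{D}}+1}{2}\bigr)<1$, the (exact, error-free) modified Bohr–Sommerfeld condition $$\Phi(\mathcal{E})=\Bigl(n+\frac{\sigma_{\mathcal{D}}+1}{2}\Bigr)\pi$$ has the unique solution $\mathcal{E}\in[0,1)$ given by $$\mathcal{E}_n^{(\sigma_{\mathcal{D}})}=1-\Bigl[1-\varepsilon\Bigl(n+\frac{\sigma_{\mathcal{D}}+1}{2}\Bigr)\Bigr]^2 .$$ In particular $\mathcal{E}_n^{(-1)}=1-(1-\varepsilon n)^2=\lambda_n^{(+)}$ and $\mathcal{E}_n^{(+1)}=1-(1-\varepsilon(n+1))^2=\lambda_n^{(-)}$ coincide exactly with the Pöschl–Teller eigenvalues of the upper and lower components of $D_\varepsilon^2$, and $n=0$, $\sigma_{\mathcal{D}}=-1$ gives $\mathcal{E}=0$.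
   Context: $D_\varepsilon=\begin{bmatrix}0 & m-\varepsilon\partial_x\\ m+\varepsilon\partial_x & 0\end{bmatrix}$ with $m=\tanh$, so $D_\varepsilon^2=\operatorname{diag}(-\varepsilon^2\partial_x^2+\tanh^2x-\varepsilon\operatorname{sech}^2x,\;-\varepsilon^2\partial_x^2+\tanh^2x+\varepsilon\operatorname{sech}^2x)$; the pseudo-spin index $\sigma_{\mathcal{D}}=-1$ labels the upper component and $\sigma_{\mathcal{D}}=+1$ the lower. The numbers $\lambda_k^{(+)}=1-(1-\varepsilon k)^2$ and $\lambda_k^{(-)}=1-(1-\varepsilon(k+1))^2$ are the discrete eigenvalues of the upper and lower components respectively. *)

theory Defs
  imports "HOL-Analysis.Analysis"
begin

definition Phi :: "real \<Rightarrow> real \<Rightarrow> real" where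
  "Phi \<epsilon> E = (if E = 0 then 0 else
     (1 / \<epsilon>) * integral {- artanh (sqrt E) .. artanh (sqrt E)}
        (\<lambda>x. sqrt (E - (tanh x)\<^sup>2)))"

definition lambda_plus :: "real \<Rightarrow> nat \<Rightarrow> real" where
  "lambda_plus \<epsilon> k = 1 - (1 - \<epsilon> * real k)\<^sup>2"

definition lambda_minus :: "real \<Rightarrow> nat \<Rightarrow> real" where
  "lambda_minus \<epsilon> k = 1 - (1 - \<epsilon> * (real k + 1))\<^sup>2"

definition E_BS :: "real \<Rightarrow> int \<Rightarrow> nat \<Rightarrow> real" where
  "E_BS \<epsilon> \<sigma> n = 1 - (1 - \<epsilon> * (real n + (real_of_int \<sigma> + 1) / 2))\<^sup>2"

end

theory Submission
  imports Defs
begin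


lemma tanh_sinh_cosh: "tanh (x::real) = sinh x / cosh x"
  by (simp add: tanh_def)

lemma cosh_tanh_id: "(cosh (x::real))\<^sup>2 * (1 - (tanh x)\<^sup>2) = 1"
proof -
  have "cosh x > 0" by simp
  then have "(cosh x)\<^sup>2 * (1 - (tanh x)\<^sup>2) = (cosh x)\<^sup>2 - (sinh x)\<^sup>2"
    by (simp add: tanh_sinh_cosh power_divide field_simps)
  then show ?thesis using cosh_square_eq[of x] by simp
qed

lemma tanh_artanh_real:
  assumes "-1 < k" "k < (1::real)"
  shows "tanh (artanh k) = k"
proof -
  have "-2 * artanh k = ln ((1-k)/(1+k))"
    using assms by (simp add: artanh_def ln_div)
  then have e: "exp (-2 * artanh k) = (1-k)/(1+k)"
    using assms by simp
  show ?thesis unfolding tanh_real_altdef e using assms by (simp add: field_simps)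
qed

lemma integral_key:
  assumes "0 < E" "E < (1::real)"
  shows "((\<lambda>x. sqrt (E - (tanh x)\<^sup>2)) has_integral pi * (1 - sqrt (1 - E)))
           {- artanh (sqrt E) .. artanh (sqrt E)}"
proof -
  define k where "k = sqrt E"
  define c where "c = sqrt (1 - E)"
  define a where "a = artanh k"
  have k: "0 < k" "k < 1" "k^2 = E" using assms by (auto simp: k_def real_sqrt_lt_1_iff)
  have c: "0 < c" "c^2 = 1 - E" using assms by (auto simp: c_def)
  have ta: "tanh a = k" using k by (simp add: a_def tanh_artanh_real)
  have apos: "0 < a" using ta k by (metis tanh_real_pos_iff)
  have cch: "c * cosh a = 1"
  proof -
    have "(c * cosh a)^2 = 1" using cosh_tanh_id[of a] ta c k
      by (simp add: power_mult_distrib mult.commute)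
    moreover have "c * cosh a > 0" using c by simp
    ultimately show ?thesis by (metis abs_of_pos power2_eq_1_iff abs_minus_cancel abs_one
         less_irrefl neg_0_less_iff_less zero_less_one)
  qed
  have sa: "c * sinh a / k = 1"
  proof -
    have "sinh a = tanh a * cosh a" by (simp add: tanh_sinh_cosh)
    then show ?thesis using cch ta k by (simp add: field_simps)
  qed
  define G where "G x = arcsin (tanh x / k) - c * arcsin (c * sinh x / k)" for x
  have bnd1: "\<bar>tanh x / k\<bar> \<le> 1" if "x \<in> {-a..a}" for x
  proof -
    have "\<bar>x\<bar> \<le> a" using that by auto
    then have "tanh \<bar>x\<bar> \<le> tanh a" by (simp only: tanh_real_le_iff)
    then have "\<bar>tanh x\<bar> \<le> tanh a" by simp
    then show ?thesis using ta k by (simp add: divide_le_eq_1 abs_divide)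
  qed
  have bnd2: "\<bar>c * sinh x / k\<bar> \<le> 1" if "x \<in> {-a..a}" for x
  proof -
    have "\<bar>x\<bar> \<le> a" using that by auto
    then have "sinh \<bar>x\<bar> \<le> sinh a" by (simp only: sinh_real_le_iff)
    then have "\<bar>sinh x\<bar> \<le> sinh a" by simp
    then have "c * \<bar>sinh x\<bar> / k \<le> c * sinh a / k" using c k
      by (simp add: divide_right_mono)
    moreover have "\<bar>c * sinh x / k\<bar> = c * \<bar>sinh x\<bar> / k" using c k by (simp add: abs_mult abs_divide)
    ultimately show ?thesis using sa by metis
  qed
  have sbnd1: "\<bar>tanh x / k\<bar> < 1" if "x \<in> {-a<..<a}" for x
  proof -
    have "\<bar>x\<bar> < a" using that by auto
    then have "tanh \<bar>x\<bar> < tanh a" by (simp only: tanh_real_less_iff)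
    then have "\<bar>tanh x\<bar> < tanh a" by simp
    then show ?thesis using ta k by (simp add: abs_divide)
  qed
  have sbnd2: "\<bar>c * sinh x / k\<bar> < 1" if "x \<in> {-a<..<a}" for x
  proof -
    have "\<bar>x\<bar> < a" using that by auto
    then have "sinh \<bar>x\<bar> < sinh a" by (simp only: sinh_real_less_iff)
    then have "\<bar>sinh x\<bar> < sinh a" by simp
    then have "c * \<bar>sinh x\<bar> / k < c * sinh a / k" using c k
      by (simp add: divide_strict_right_mono)
    moreover have "\<bar>c * sinh x / k\<bar> = c * \<bar>sinh x\<bar> / k" using c k by (simp add: abs_mult abs_divide)
    ultimately show ?thesis using sa by metis
  qed
  have b1: "- 1 \<le> tanh x / k \<and> tanh x / k \<le> 1" if "- a \<le> x" "x \<le> a" for x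
    using bnd1[of x] that unfolding abs_le_iff by (simp del: abs_divide)
  have b2: "- 1 \<le> c * sinh x / k \<and> c * sinh x / k \<le> 1" if "- a \<le> x" "x \<le> a" for x
    using bnd2[of x] that unfolding abs_le_iff by (simp del: abs_divide abs_mult)
  have cont: "continuous_on {-a..a} G"
    unfolding G_def
    by (intro continuous_intros continuous_on_arcsin) (use k b1 b2 in fastforce)+
  have deriv: "(G has_real_derivative sqrt (E - (tanh x)\<^sup>2)) (at x)" if x: "x \<in> {-a<..<a}" for x
  proof -
    define T where "T = tanh x"
    have T1: "\<bar>T / k\<bar> < 1" using sbnd1[OF x] by (simp add: T_def)
    have T2: "\<bar>c * sinh x / k\<bar> < 1" using sbnd2[OF x] .
    have T1': "-1 < tanh x / k \<and> tanh x / k < 1" using T1 unfolding T_def abs_less_iff by (simp del: abs_divide)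
    have T2': "-1 < c * sinh x / k \<and> c * sinh x / k < 1" using T2 unfolding abs_less_iff by (simp del: abs_divide abs_mult)
    have d1: "((\<lambda>x. arcsin (tanh x / k)) has_real_derivative
         inverse (sqrt (1 - (tanh x / k)\<^sup>2)) * ((1 - tanh x ^ 2) / k)) (at x)"
      by (rule DERIV_chain2[OF DERIV_arcsin]) (use T1' k in \<open>auto intro!: derivative_eq_intros\<close>)
    have d2: "((\<lambda>x. arcsin (c * sinh x / k)) has_real_derivative
         inverse (sqrt (1 - (c * sinh x / k)\<^sup>2)) * (c * cosh x / k)) (at x)"
      by (rule DERIV_chain2[OF DERIV_arcsin]) (use T2' k in \<open>auto intro!: derivative_eq_intros\<close>)
    have d: "(G has_real_derivative inverse (sqrt (1 - (tanh x / k)\<^sup>2)) * ((1 - tanh x ^ 2) / k)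
        - c * (inverse (sqrt (1 - (c * sinh x / k)\<^sup>2)) * (c * cosh x / k))) (at x)"
      unfolding G_def by (rule DERIV_diff[OF d1 DERIV_cmult[OF d2]])
    have Tlt: "T^2 < E"
    proof -
      have "\<bar>T\<bar> < k" using T1 k by (simp add: abs_divide)
      then have "\<bar>T\<bar>^2 < k^2" by (intro power_strict_mono) auto
      then show ?thesis using k by simp
    qed
    have C: "(cosh x)\<^sup>2 * (1 - T^2) = 1" using cosh_tanh_id[of x] by (simp add: T_def)
    have S: "sinh x = T * cosh x" by (simp add: T_def tanh_sinh_cosh)
    have e1: "sqrt (1 - (tanh x / k)\<^sup>2) = sqrt (E - T^2) / k"
    proof -
      have "1 - (tanh x / k)\<^sup>2 = (E - T^2) / k^2" using k assms by (simp add: T_def field_simps)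
      then show ?thesis using k by (simp add: real_sqrt_divide k_def[symmetric])
    qed
    have e2: "sqrt (1 - (c * sinh x / k)\<^sup>2) = cosh x * sqrt (E - T^2) / k"
    proof -
      have "1 - (c * sinh x / k)\<^sup>2 = (cosh x)\<^sup>2 * (E - T^2) / k^2"
      proof -
        have h: "E = E * ((cosh x)\<^sup>2 * (1 - T^2))" using C by simp
        have "(c * sinh x / k)\<^sup>2 = (1 - E) * T^2 * (cosh x)\<^sup>2 / E"
          unfolding S using c k by (simp add: power_mult_distrib power_divide)
        moreover have "1 - (1 - E) * T^2 * (cosh x)\<^sup>2 / E = (cosh x)\<^sup>2 * (E - T^2) / E"
        proof -
          have "E - (1 - E) * T^2 * (cosh x)\<^sup>2 = (cosh x)\<^sup>2 * (E - T^2)"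
            using h by (simp add: algebra_simps)
          then show ?thesis using assms by (simp add: field_simps)
        qed
        ultimately show ?thesis using k by simp
      qed
      then show ?thesis using k by (simp add: real_sqrt_divide real_sqrt_mult k_def[symmetric])
    qed
    have pos: "sqrt (E - T^2) > 0" using Tlt by simp
    have "inverse (sqrt (1 - (tanh x / k)\<^sup>2)) * ((1 - tanh x ^ 2) / k)
        - c * (inverse (sqrt (1 - (c * sinh x / k)\<^sup>2)) * (c * cosh x / k))
        = ((1 - T^2) - c^2) / sqrt (E - T^2)"
      unfolding e1 e2 using k pos by (simp add: T_def field_simps power2_eq_square)
    also have "\<dots> = sqrt (E - T^2)"
      using c pos by (simp add: field_simps)
    finally show ?thesis using d by (simp add: T_def)
  qed
  have "((\<lambda>x. sqrt (E - (tanh x)\<^sup>2)) has_integral (G a - G (-a))) {-a..a}"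
    by (rule fundamental_theorem_of_calculus_interior)
       (use apos cont deriv in \<open>auto simp: has_real_derivative_iff_has_vector_derivative\<close>)
  moreover have "G a - G (-a) = pi * (1 - sqrt (1 - E))"
  proof -
    have r1: "tanh a / k = 1" using ta k by simp
    have r2: "tanh (-a) / k = -1" using ta k by simp
    have r3: "c * sinh (-a) / k = -1"
    proof -
      have "c * sinh (-a) / k = - (c * sinh a / k)" by simp
      then show ?thesis using sa by (simp only:)
    qed
    have "G a = pi/2 - c * (pi/2)" unfolding G_def r1 sa by simp
    moreover have "G (-a) = - (pi/2) + c * (pi/2)" unfolding G_def r2 r3 by simp
    ultimately show ?thesis by (simp add: c_def algebra_simps)
  qed
  ultimately show ?thesis by (simp add: a_def k_def)
qed

lemma Phi_closed:
  assumes "\<epsilon> > 0" "0 \<le> E" "E < 1"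
  shows "Phi \<epsilon> E = pi / \<epsilon> * (1 - sqrt (1 - E))"
proof (cases "E = 0")
  case True then show ?thesis by (simp add: Phi_def)
next
  case False
  then have "integral {- artanh (sqrt E) .. artanh (sqrt E)} (\<lambda>x. sqrt (E - (tanh x)\<^sup>2))
      = pi * (1 - sqrt (1 - E))" using integral_key[of E] assms by (simp add: integral_unique)
  then show ?thesis using False by (simp add: Phi_def)
qed

lemma BS_solve:
  fixes \<epsilon> N E :: real
  assumes "\<epsilon> > 0" "0 \<le> \<epsilon> * N" "\<epsilon> * N < 1" "0 \<le> E" "E < 1"
  shows "pi / \<epsilon> * (1 - sqrt (1 - E)) = N * pi \<longleftrightarrow> E = 1 - (1 - \<epsilon> * N)\<^sup>2"
proof -
  have "pi / \<epsilon> * (1 - sqrt (1 - E)) = N * pi \<longleftrightarrow> sqrt (1 - E) = 1 - \<epsilon> * N"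
  proof -
    have "pi / \<epsilon> * (1 - sqrt (1 - E)) = N * pi \<longleftrightarrow> pi * (1 - sqrt (1 - E)) = pi * (\<epsilon> * N)"
      using assms by (auto simp: field_simps)
    also have "\<dots> \<longleftrightarrow> 1 - sqrt (1 - E) = \<epsilon> * N" using pi_gt_zero by simp
    finally show ?thesis by linarith
  qed
  also have "\<dots> \<longleftrightarrow> 1 - E = (1 - \<epsilon> * N)\<^sup>2"
    using assms by (metis diff_ge_0_iff_ge less_eq_real_def real_sqrt_unique sqrt_ge_absD
        abs_of_nonneg real_sqrt_pow2 diff_gt_0_iff_gt)
  also have "\<dots> \<longleftrightarrow> E = 1 - (1 - \<epsilon> * N)\<^sup>2" by auto
  finally show ?thesis .
qed

lemma BS_range:
  fixes \<epsilon> N :: real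
  assumes "0 \<le> \<epsilon> * N" "\<epsilon> * N < 1"
  shows "1 - (1 - \<epsilon> * N)\<^sup>2 \<in> {0..<1}"
proof -
  have "(1 - \<epsilon> * N)\<^sup>2 \<le> 1" using assms by (simp add: power_le_one)
  moreover have "(1 - \<epsilon> * N)\<^sup>2 > 0" using assms by simp
  ultimately show ?thesis by simp
qed

theorem proposition5p1:
  fixes \<epsilon> :: real
  assumes "\<epsilon> > 0"
  shows "(\<forall>E\<in>{0..<1}. Phi \<epsilon> E = pi / \<epsilon> * (1 - sqrt (1 - E)))
    \<and> (\<forall>\<sigma>\<in>{-1, 1::int}. \<forall>n::nat.
          0 \<le> \<epsilon> * (real n + (real_of_int \<sigma> + 1) / 2)
          \<and> \<epsilon> * (real n + (real_of_int \<sigma> + 1) / 2) < 1 \<longrightarrow>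
          E_BS \<epsilon> \<sigma> n \<in> {0..<1}
          \<and> (\<forall>E\<in>{0..<1}. Phi \<epsilon> E = (real n + (real_of_int \<sigma> + 1) / 2) * pi
                 \<longleftrightarrow> E = E_BS \<epsilon> \<sigma> n))
    \<and> (\<forall>n. E_BS \<epsilon> (-1) n = lambda_plus \<epsilon> n \<and> E_BS \<epsilon> 1 n = lambda_minus \<epsilon> n)
    \<and> E_BS \<epsilon> (-1) 0 = 0"
  proof -
  have A: "\<forall>E\<in>{0..<1}. Phi \<epsilon> E = pi / \<epsilon> * (1 - sqrt (1 - E))"
    using Phi_closed assms by auto
  have B: "\<forall>\<sigma>\<in>{-1, 1::int}. \<forall>n::nat.
          0 \<le> \<epsilon> * (real n + (real_of_int \<sigma> + 1) / 2)
          \<and> \<epsilon> * (real n + (real_of_int \<sigma> + 1) / 2) < 1 \<longrightarrow>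
          E_BS \<epsilon> \<sigma> n \<in> {0..<1}
          \<and> (\<forall>E\<in>{0..<1}. Phi \<epsilon> E = (real n + (real_of_int \<sigma> + 1) / 2) * pi
                 \<longleftrightarrow> E = E_BS \<epsilon> \<sigma> n)"
  proof (intro ballI allI impI conjI)
    fix \<sigma> :: int and n :: nat and E :: real
    assume h: "0 \<le> \<epsilon> * (real n + (real_of_int \<sigma> + 1) / 2)
          \<and> \<epsilon> * (real n + (real_of_int \<sigma> + 1) / 2) < 1"
    show "E_BS \<epsilon> \<sigma> n \<in> {0..<1}" unfolding E_BS_def using BS_range h by blast
    assume "E \<in> {0..<1}"
    then show "Phi \<epsilon> E = (real n + (real_of_int \<sigma> + 1) / 2) * pi \<longleftrightarrow> E = E_BS \<epsilon> \<sigma> n"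
      unfolding E_BS_def using Phi_closed[OF assms] BS_solve[OF assms] h by auto
  qed
  have C: "\<forall>n. E_BS \<epsilon> (-1) n = lambda_plus \<epsilon> n \<and> E_BS \<epsilon> 1 n = lambda_minus \<epsilon> n"
    by (simp add: E_BS_def lambda_plus_def lambda_minus_def)
  have D: "E_BS \<epsilon> (-1) 0 = 0" by (simp add: E_BS_def)
  show ?thesis using A B C D by blast
qed

end
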